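(* Let $G=(V,E)$ be a regular simple graph on $n$ vertices and let $2\le k\le n-2$ be such that $F_k(G)$ is regular. Then there exists a constant $c$, depending on $k$, the degree of $G$ and the degree of $F_k(G)$, such that $d_A(b)=c$ for every vertex $A$ of $F_k(G)$ (i.e. every $k$-subset $A\subseteq V$) and every $b\in V\setminus A$.
   Context: For a simple graph $G=(V,E)$ on $n$ vertices and an integer $1\le k<n$, the $k$-token graph $F_k(G)$ is the graph whose vertices are all $k$-element subsets of $V$, two such subsets $A,B$ being adjacent whenever their symmetric difference $A\triangle B$ is a pair $\{a,b\}$ with $a$ adjacent to $b$ in $G$. For $X\subseteq V$ and $v\in V$, $d_X(v)$ denotes the number of neighbors of $v$ in $G$ that lie in $X$. *)

theory Defs
  imports Main
begin

definition simple_graph :: "'a set \<Rightarrow> ('a \<Rightarrow> 'a \<Rightarrow> bool) \<Rightarrow> bool" where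
  "simple_graph V E \<longleftrightarrow> finite V \<and> (\<forall>u v. E u v \<longrightarrow> u \<in> V \<and> v \<in> V)
     \<and> (\<forall>u v. E u v \<longrightarrow> E v u) \<and> (\<forall>v. \<not> E v v)"

definition dX :: "('a \<Rightarrow> 'a \<Rightarrow> bool) \<Rightarrow> 'a set \<Rightarrow> 'a \<Rightarrow> nat" where
  "dX E X v = card {u \<in> X. E v u}"

definition graph_degree :: "'a set \<Rightarrow> ('a \<Rightarrow> 'a \<Rightarrow> bool) \<Rightarrow> 'a \<Rightarrow> nat" where
  "graph_degree V E v = card {u \<in> V. E v u}"

definition regular_graph :: "'a set \<Rightarrow> ('a \<Rightarrow> 'a \<Rightarrow> bool) \<Rightarrow> bool" where
  "regular_graph V E \<longleftrightarrow> (\<exists>d. \<forall>v \<in> V. graph_degree V E v = d)"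

definition token_vertices :: "'a set \<Rightarrow> nat \<Rightarrow> 'a set set" where
  "token_vertices V k = {A. A \<subseteq> V \<and> card A = k}"

definition token_adj :: "('a \<Rightarrow> 'a \<Rightarrow> bool) \<Rightarrow> 'a set \<Rightarrow> 'a set \<Rightarrow> bool" where
  "token_adj E A B \<longleftrightarrow> (\<exists>a b. (A - B) \<union> (B - A) = {a, b} \<and> E a b)"

end

theory Submission
  imports Defs
begin

lemma cnt: "finite C \<Longrightarrow> (\<Sum>a\<in>C. (if P a then 1 else 0::nat)) = card {a\<in>C. P a}"
proof (induction C rule: finite_induct)
  case (insert x F)
  have "{a \<in> insert x F. P a} = (if P x then insert x {a\<in>F. P a} else {a\<in>F. P a})" by auto
  then show ?case using insert by simp
qed simp

lemma nbr_split:
  assumes "finite V" "A \<subseteq> V"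
  shows "card {u \<in> V. E a u} = card {u \<in> V - A. E a u} + dX E A a"
proof -
  have "{u \<in> V. E a u} = {u \<in> V - A. E a u} \<union> {u \<in> A. E a u}" using assms by auto
  moreover have "finite {u \<in> V - A. E a u}" using assms by auto
  moreover have "finite {u \<in> A. E a u}" using finite_subset[OF assms(2,1)] by simp
  moreover have "{u \<in> V - A. E a u} \<inter> {u \<in> A. E a u} = {}" by auto
  ultimately show ?thesis unfolding dX_def by (simp only: card_Un_disjoint)
qed

lemma token_deg:
  assumes sg: "simple_graph V E" and AV: "A \<subseteq> V" and cA: "card A = k" and k1: "1 \<le> k"
  shows "card {B \<in> token_vertices V k. token_adj E A B} = card {(a,b). a \<in> A \<and> b \<in> V - A \<and> E a b}"
proof -
  have fin: "finite V" using sg unfolding simple_graph_def by auto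
  have finA: "finite A" using finite_subset[OF AV fin] .
  have sym: "\<And>u v. E u v \<Longrightarrow> E v u" and irr: "\<And>v. \<not> E v v"
    using sg unfolding simple_graph_def by auto
  let ?f = "\<lambda>(a,b). insert b (A - {a})"
  let ?P = "{(a,b). a \<in> A \<and> b \<in> V - A \<and> E a b}"
  have inj: "inj_on ?f ?P"
  proof (rule inj_onI)
    fix x y assume x: "x \<in> ?P" and y: "y \<in> ?P" and eq: "?f x = ?f y"
    obtain a b where xa: "x = (a,b)" by (cases x)
    obtain a' b' where ya: "y = (a',b')" by (cases y)
    have h: "insert b (A - {a}) = insert b' (A - {a'})" using eq xa ya by simp
    have "a \<in> A" "b \<notin> A" "a' \<in> A" "b' \<notin> A" using x y xa ya by auto
    then have "b = b'" using h by blast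
    moreover have "a = a'"
    proof (rule ccontr)
      assume "a \<noteq> a'"
      then have "a \<in> insert b' (A - {a'})" using \<open>a \<in> A\<close> by auto
      then have "a \<in> insert b (A - {a})" using h by simp
      then show False using \<open>a \<in> A\<close> \<open>b \<notin> A\<close> by auto
    qed
    ultimately show "x = y" using xa ya by simp
  qed
  have img: "{B \<in> token_vertices V k. token_adj E A B} = ?f ` ?P"
  proof
    show "?f ` ?P \<subseteq> {B \<in> token_vertices V k. token_adj E A B}"
    proof
      fix B assume "B \<in> ?f ` ?P"
      then obtain a b where ab: "a \<in> A" "b \<in> V - A" "E a b" and B: "B = insert b (A - {a})" by auto
      have "card B = k" using B ab finA cA k1 by (simp add: card_Diff_singleton)
      moreover have "B \<subseteq> V" using B ab AV by auto
      moreover have "(A - B) \<union> (B - A) = {a, b}" using B ab by auto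
      ultimately show "B \<in> {B \<in> token_vertices V k. token_adj E A B}"
        unfolding token_vertices_def token_adj_def using ab by auto
    qed
  next
    show "{B \<in> token_vertices V k. token_adj E A B} \<subseteq> ?f ` ?P"
    proof
      fix B assume "B \<in> {B \<in> token_vertices V k. token_adj E A B}"
      then have BV: "B \<subseteq> V" and cB: "card B = k" and "token_adj E A B"
        unfolding token_vertices_def by auto
      then obtain a b where u: "(A - B) \<union> (B - A) = {a, b}" and e: "E a b"
        unfolding token_adj_def by auto
      have ne: "a \<noteq> b" using e irr by auto
      have finB: "finite B" using finite_subset[OF BV fin] .
      have c1: "card (A - B) = card (B - A)"
      proof -
        have "card (A - B) = card A - card (A \<inter> B)" using finA by (simp add: card_Diff_subset_Int)
        moreover have "card (B - A) = card B - card (B \<inter> A)" using finB by (simp add: card_Diff_subset_Int)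
        moreover have "B \<inter> A = A \<inter> B" by blast
        ultimately show ?thesis using cA cB by simp
      qed
      have c2: "card (A - B) + card (B - A) = 2"
      proof -
        have "card ((A - B) \<union> (B - A)) = card (A - B) + card (B - A)"
          by (rule card_Un_disjoint) (use finA finB in auto)
        then show ?thesis using u ne by simp
      qed
      have "card (A - B) = 1" "card (B - A) = 1" using c1 c2 by auto
      then obtain x y where x: "A - B = {x}" and y: "B - A = {y}" by (auto simp: card_1_singleton_iff)
      have Beq: "B = insert y (A - {x})" using x y by blast
      have "(x = a \<and> y = b) \<or> (x = b \<and> y = a)" using u x y ne by (auto simp: doubleton_eq_iff)
      then have "E x y" using e sym by auto
      moreover have "x \<in> A" "y \<in> V - A" using x y BV by auto
      ultimately show "B \<in> ?f ` ?P" using Beq by (auto intro!: image_eqI[where x="(x,y)"])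
    qed
  qed
  show ?thesis unfolding img by (rule card_image[OF inj])
qed

lemma pairs_sum:
  assumes "finite A" "finite V"
  shows "card {(a,b). a \<in> A \<and> b \<in> V - A \<and> E a b} = (\<Sum>a\<in>A. card {u \<in> V - A. E a u})"
proof -
  have "{(a,b). a \<in> A \<and> b \<in> V - A \<and> E a b} = (SIGMA a:A. {u \<in> V - A. E a u})" by auto
  moreover have "card (SIGMA a:A. {u \<in> V - A. E a u}) = (\<Sum>a\<in>A. card {u \<in> V - A. E a u})"
    by (rule card_SigmaI) (use assms in auto)
  ultimately show ?thesis by simp
qed

definition PS :: "('a \<Rightarrow> 'a \<Rightarrow> bool) \<Rightarrow> 'a set \<Rightarrow> nat" where
  "PS E A = (\<Sum>a\<in>A. dX E A a)"

lemma dX_insert: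
  assumes "finite C" "x \<notin> C"
  shows "dX E (insert x C) a = dX E C a + (if E a x then 1 else 0)"
proof -
  have "{u \<in> insert x C. E a u} = (if E a x then insert x {u \<in> C. E a u} else {u \<in> C. E a u})" by auto
  then show ?thesis unfolding dX_def using assms by auto
qed

lemma PS_insert:
  assumes sg: "simple_graph V E" and "finite C" "x \<notin> C"
  shows "PS E (insert x C) = PS E C + 2 * dX E C x"
proof -
  have sym: "\<And>u v. E u v \<longleftrightarrow> E v u" and irr: "\<And>v. \<not> E v v"
    using sg unfolding simple_graph_def by auto
  have "PS E (insert x C) = dX E (insert x C) x + (\<Sum>a\<in>C. dX E (insert x C) a)"
    unfolding PS_def using assms by simp
  also have "dX E (insert x C) x = dX E C x" using dX_insert[OF assms(2,3)] irr by simp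
  also have "(\<Sum>a\<in>C. dX E (insert x C) a) = (\<Sum>a\<in>C. dX E C a + (if E a x then 1 else 0))"
    using dX_insert[OF assms(2,3)] by simp
  also have "\<dots> = PS E C + card {a \<in> C. E a x}"
    unfolding PS_def using assms by (simp add: sum.distrib cnt)
  also have "{a \<in> C. E a x} = {u \<in> C. E x u}" using sym by auto
  also have "card \<dots> = dX E C x" unfolding dX_def ..
  finally show ?thesis by simp
qed

theorem lemma1:
  fixes V :: "'a set" and E :: "'a \<Rightarrow> 'a \<Rightarrow> bool" and k :: nat
  assumes "simple_graph V E"
    and "regular_graph V E"
    and "2 \<le> k" and "k + 2 \<le> card V"
    and "regular_graph (token_vertices V k) (token_adj E)"
  shows "\<exists>c. \<forall>A \<in> token_vertices V k. \<forall>b \<in> V - A. dX E A b = c"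
proof -
  note sg = assms(1)
  have fin: "finite V" using sg unfolding simple_graph_def by auto
  have sym: "\<And>u v. E u v \<longleftrightarrow> E v u" and irr: "\<And>v. \<not> E v v"
    using sg unfolding simple_graph_def by auto
  obtain d where d: "\<And>v. v \<in> V \<Longrightarrow> card {u \<in> V. E v u} = d"
    using assms(2) unfolding regular_graph_def graph_degree_def by auto
  obtain D where D: "\<And>A. A \<in> token_vertices V k \<Longrightarrow> card {B \<in> token_vertices V k. token_adj E A B} = D"
    using assms(5) unfolding regular_graph_def graph_degree_def by auto
  have PSc: "PS E A = k * d - D" if AV: "A \<subseteq> V" and cA: "card A = k" for A
  proof -
    have finA: "finite A" using finite_subset[OF AV fin] .
    have "D = card {(a,b). a \<in> A \<and> b \<in> V - A \<and> E a b}"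
      using D[of A] token_deg[OF sg AV cA] assms(3) AV cA unfolding token_vertices_def by auto
    also have "\<dots> = (\<Sum>a\<in>A. card {u \<in> V - A. E a u})" using pairs_sum finA fin by blast
    finally have "D + PS E A = (\<Sum>a\<in>A. card {u \<in> V - A. E a u} + dX E A a)"
      unfolding PS_def by (simp add: sum.distrib)
    also have "\<dots> = (\<Sum>a\<in>A. d)" using nbr_split[OF fin AV] d AV
      by (intro sum.cong) auto
    also have "\<dots> = k * d" using cA by simp
    finally show ?thesis by simp
  qed
  define P0 where "P0 = k * d - D"
  have g: "dX E C x = dX E C y" if CV: "C \<subseteq> V" and cC: "card C = k - 1"
     and x: "x \<in> V - C" and y: "y \<in> V - C" for C x y
  proof -
    have finC: "finite C" using finite_subset[OF CV fin] .
    have "PS E (insert x C) = P0" "PS E (insert y C) = P0"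
      using PSc[of "insert x C"] PSc[of "insert y C"] CV x y finC cC assms(3) P0_def by auto
    then show ?thesis using PS_insert[OF sg finC, of x] PS_insert[OF sg finC, of y] x y by simp
  qed
  have key: "dX E A b = dX E A a + (if E a b then 1 else 0)"
    if AV: "A \<subseteq> V" and cA: "card A = k" and b: "b \<in> V - A" and a: "a \<in> A" for A a b
  proof -
    have finA: "finite A" using finite_subset[OF AV fin] .
    define C where "C = A - {a}"
    have AC: "A = insert a C" "a \<notin> C" using a C_def by auto
    have finC: "finite C" using finA C_def by auto
    have cC: "card C = k - 1" using C_def cA a finA by simp
    have "dX E C a = dX E C b" using g[of C a b] C_def AV cC a b by auto
    moreover have "dX E A a = dX E C a" using dX_insert[OF finC AC(2)] AC irr by simp
    moreover have "dX E A b = dX E C b + (if E b a then 1 else 0)" using dX_insert[OF finC AC(2)] AC by simp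
    ultimately show ?thesis using sym by simp
  qed
  have "\<forall>A \<in> token_vertices V k. \<forall>b \<in> V - A. dX E A b = P0 div (k - 1)"
  proof (intro ballI)
    fix A b assume A: "A \<in> token_vertices V k" and b: "b \<in> V - A"
    have AV: "A \<subseteq> V" and cA: "card A = k" using A unfolding token_vertices_def by auto
    have finA: "finite A" using finite_subset[OF AV fin] .
    have "k * dX E A b = (\<Sum>a\<in>A. dX E A b)" using cA by simp
    also have "\<dots> = (\<Sum>a\<in>A. dX E A a + (if E a b then 1 else 0))"
      using key[OF AV cA b] by (intro sum.cong) auto
    also have "\<dots> = PS E A + card {a \<in> A. E a b}"
      unfolding PS_def using finA by (simp add: sum.distrib cnt)
    also have "{a \<in> A. E a b} = {u \<in> A. E b u}" using sym by auto
    also have "card \<dots> = dX E A b" unfolding dX_def ..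
    finally have "k * dX E A b = P0 + dX E A b" using PSc[OF AV cA] P0_def by simp
    then have "(k - 1) * dX E A b = P0" using assms(3)
      by (metis add_diff_cancel_right' diff_mult_distrib mult_1)
    then show "dX E A b = P0 div (k - 1)" using assms(3) by auto
  qed
  then show ?thesis by blast
qed

end
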